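(* Suppose Assumption A and Assumption B (defined in the context) hold for the dynamic accuracy DFO algorithm described in the context. If at iteration $k$ the model $m^k$ is fully linear in $B(\theta^k,\Delta^k)$ and $$\Delta^k\le c_0\|g^k\|,\qquad c_0:=\min\left(\frac{1-\eta_2-2\eta_1'}{4\kappa_{\rm ef}},\frac{1}{\kappa_H}\right)>0,$$ then $\tilde\rho^k\ge\eta_2$.
   Context: Setting. Let $n,d\ge 1$ and $r=(r_1,\ldots,r_n):\mathbb{R}^d\to\mathbb{R}^n$, with objective $f(\theta)=\frac1n\|r(\theta)\|^2=\frac1n\sum_{i=1}^n r_i(\theta)^2$ (Euclidean norm). In the application, $r_i(\theta)=\|\hat x_i(\theta)-x_i\|$ where $\hat x_i(\theta)$ is the minimizer of a lower-level problem that can only be computed approximately. The algorithm never sees $r$ exactly: for any $\theta$ it can compute an approximation $\tilde r(\theta)$ (in the application $\tilde r_i(\theta)=\|\tilde x_i(\theta)-x_i\|$ with $\tilde x_i(\theta)$ an approximate minimizer whose error can be made as small as desired), and sets $\tilde f(\theta)=\frac1n\|\tilde r(\theta)\|^2$. We say $\tilde f(\theta)$ is evaluated with accuracy $\delta$ if $|\tilde f(\theta)-f(\theta)|\le\delta$. Models. At iteration $k$ the algorithm holds an iterate $\theta^k$, a radius $\Delta^k>0$, and interpolation points $z^0=\theta^k,z^1,\ldots,z^d\in\mathbb{R}^d$ with $z^1-\theta^k,\ldots,z^d-\theta^k$ linearly independent; $J^k\in\mathbb{R}^{n\times d}$ is the unique matrix with $\tilde r(\theta^k)+J^k(z^t-\theta^k)=\tilde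 r(z^t)$ for $t=1,\ldots,d$. Set $M^k(s)=\tilde r(\theta^k)+J^k s$ and $m^k(s)=\frac1n\|M^k(s)\|^2=\tilde f(\theta^k)+(g^k)^Ts+\frac12 s^TH^ks$ with $g^k=\frac2n (J^k)^T\tilde r(\theta^k)$, $H^k=\frac2n(J^k)^TJ^k$. Fixed constants $\kappa_{\rm ef},\kappa_{\rm eg}>0$ (independent of $k,\theta^k,\Delta^k$) are given, and $m^k$ is called fully linear in $B(\theta^k,\Delta^k)$ if $|f(\theta^k+s)-m^k(s)|\le\kappa_{\rm ef}(\Delta^k)^2$ and $\|\nabla f(\theta^k+s)-\nabla m^k(s)\|\le\kappa_{\rm eg}\Delta^k$ for all $\|s\|\le\Delta^k$. The algorithm has a procedure which, by replacing interpolation points, makes the model fully linear in a given ball. Algorithm. Parameters: $\Delta_{\max}>0$, $0<\gamma_{\rm dec}<1<\gamma_{\rm inc}$, $0<\eta_1\le\eta_2<1$, $0<\eta_1'<\min(\eta_1,1-\eta_2)/2$, $\epsilon>0$; inputs $\theta^0\in\mathbb{R}^d$, $0<\Delta^0\le\Delta_{\max}$. Build an initial model $m^0$ from an arbitrary interpolation set. For $k=0,1,2,\ldots$: (1) [accuracy phase] repeat: (a) except on the first pass, re-evaluate $\tilde f(\theta^k)$ with accuracy $\delta^k\le\eta_1'[m^k(0)-m^k(s^k)]$ using the $s^k$ from the previous pass; (b) [criticality phase] if $\|g^k\|\le\epsilon$, replace $\Delta^k$ by $\gamma_{\rm dec}^i\Delta^k$ for $i=0,1,2,\ldots$ (making the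 model fully linear in the current ball) until $m^k$ is fully linear in $B(\theta^k,\Delta^k)$ and $\Delta^k\le\|g^k\|$; (c) compute $s^k$ with $\|s^k\|\le\Delta^k$ approximately minimizing $m^k$ over that ball; until $\tilde f(\theta^k)$ has been evaluated with accuracy $\delta^k\le\eta_1'[m^k(0)-m^k(s^k)]$. (2) Evaluate $\tilde f(\theta^k+s^k)$ with accuracy $\delta^k_+\le\eta_1'[m^k(0)-m^k(s^k)]$ and set $\tilde\rho^k=\frac{\tilde f(\theta^k)-\tilde f(\theta^k+s^k)}{m^k(0)-m^k(s^k)}$. (3) Set $\theta^{k+1}=\theta^k+s^k$ if $\tilde\rho^k\ge\eta_2$, or if $\tilde\rho^k\ge\eta_1$ and $m^k$ is fully linear in $B(\theta^k,\Delta^k)$; otherwise $\theta^{k+1}=\theta^k$. Set $\Delta^{k+1}=\min(\gamma_{\rm inc}\Delta^k,\Delta_{\max})$ if $\tilde\rho^k\ge\eta_2$; $\Delta^{k+1}=\Delta^k$ if $\tilde\rho^k<\eta_2$ and $m^k$ is not fully linear in $B(\theta^k,\Delta^k)$; $\Delta^{k+1}=\gamma_{\rm dec}\Delta^k$ otherwise. (4) If $\theta^{k+1}=\theta^k+s^k$, form $m^{k+1}$ by adding $\theta^{k+1}$ to the interpolation set (removing an existing point); otherwise set $m^{k+1}=m^k$ if $m^k$ is fully linear in $B(\theta^k,\Delta^k)$, else form $m^{k+1}$ by making $m^k$ fully linear in $B(\theta^{k+1},\Delta^{k+1})$. Assumption A: the set $\mathcal{B}=\{z: \|z-\theta\|\le\Delta_{\max}\text{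 for some }\theta\text{ with }f(\theta)\le f(\theta^0)\}$ is bounded, and $r$ is continuously differentiable on $\mathcal{B}$ with $\partial r$ Lipschitz continuous with constant $L_J$ on $\mathcal{B}$. Assumption B: for all $k$, $m^k(0)-m^k(s^k)\ge\frac12\|g^k\|\min\left(\Delta^k,\frac{\|g^k\|}{\|H^k\|+1}\right)$, and there is $\kappa_H\ge1$ with $\|H^k\|+1\le\kappa_H$ for all $k$. *)

theory Defs
  imports "HOL-Analysis.Analysis"
begin

text \<open>Residual vectors live in real^'n (n = CARD('n)), parameters in real^'d (d = CARD('d)).
  Matrices are real^'d^'n (n x d). Matrix norms are operator (spectral) norms.\<close>

definition fobj :: "(real^'d \<Rightarrow> real^'n) \<Rightarrow> real^'d \<Rightarrow> real" where
  "fobj r \<theta> = (1 / real CARD('n)) * (norm (r \<theta>))^2"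

definition ftil :: "real^'n \<Rightarrow> real" where
  "ftil rv = (1 / real CARD('n)) * (norm rv)^2"

text \<open>Model m(s) = (1/n) ||rk + J s||^2, with rk = tilde r(theta^k).\<close>
definition mmodel :: "real^'n \<Rightarrow> real^'d^'n \<Rightarrow> real^'d \<Rightarrow> real" where
  "mmodel rk J s = (1 / real CARD('n)) * (norm (rk + J *v s))^2"

definition gmod :: "real^'n \<Rightarrow> real^'d^'n \<Rightarrow> real^'d" where
  "gmod rk J = (2 / real CARD('n)) *\<^sub>R (transpose J *v rk)"

definition Hmod :: "real^'d^'n \<Rightarrow> real^'d^'d" where
  "Hmod J = (\<chi> i j. (2 / real CARD('n)) * ((transpose J ** J) $ i $ j))"

definition matnorm :: "real^'a^'b \<Rightarrow> real" where
  "matnorm A = onorm (\<lambda>x. A *v x)"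

text \<open>Fully linear model in B(theta, Delta); the gradient of m at s is g + H s.\<close>
definition fully_linear ::
  "(real^'d \<Rightarrow> real^'n) \<Rightarrow> real^'n \<Rightarrow> real^'d^'n \<Rightarrow> real^'d \<Rightarrow> real \<Rightarrow> real \<Rightarrow> real \<Rightarrow> bool" where
  "fully_linear r rk J \<theta> \<Delta> kef keg \<longleftrightarrow>
     (\<forall>s. norm s \<le> \<Delta> \<longrightarrow>
        \<bar>fobj r (\<theta> + s) - mmodel rk J s\<bar> \<le> kef * \<Delta>^2 \<and>
        (\<exists>D. GDERIV (fobj r) (\<theta> + s) :> D \<and>
             norm (D - (gmod rk J + Hmod J *v s)) \<le> keg * \<Delta>))"

definition levelB :: "(real^'d \<Rightarrow> real^'n) \<Rightarrow> real^'d \<Rightarrow> real \<Rightarrow> (real^'d) set" where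
  "levelB r \<theta>0 Dmax = {z. \<exists>\<theta>. fobj r \<theta> \<le> fobj r \<theta>0 \<and> norm (z - \<theta>) \<le> Dmax}"

definition assumptionA :: "(real^'d \<Rightarrow> real^'n) \<Rightarrow> real^'d \<Rightarrow> real \<Rightarrow> real \<Rightarrow> bool" where
  "assumptionA r \<theta>0 Dmax LJ \<longleftrightarrow> bounded (levelB r \<theta>0 Dmax) \<and>
     (\<exists>Jr :: real^'d \<Rightarrow> real^'d^'n.
        (\<forall>x\<in>levelB r \<theta>0 Dmax. (r has_derivative (\<lambda>h. Jr x *v h)) (at x)) \<and>
        continuous_on (levelB r \<theta>0 Dmax) Jr \<and>
        (\<forall>x\<in>levelB r \<theta>0 Dmax. \<forall>y\<in>levelB r \<theta>0 Dmax.
            matnorm (Jr x - Jr y) \<le> LJ * norm (x - y)))"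

end

theory Submission
  imports Defs
begin

theorem lemma7:
  fixes r :: "real^'d \<Rightarrow> real^'n"
    and \<theta>0 \<theta> s :: "real^'d"
    and J :: "real^'d^'n"
    and rk rplus :: "real^'n"
    and z :: "'d \<Rightarrow> real^'d" and rz :: "'d \<Rightarrow> real^'n"
    and \<Delta> \<Delta>max \<gamma>dec \<gamma>inc \<eta>1 \<eta>2 \<eta>1' \<epsilon> kef keg \<kappa>H LJ \<delta> \<delta>plus :: real
  assumes params: "\<Delta>max > 0" "0 < \<gamma>dec" "\<gamma>dec < 1" "1 < \<gamma>inc"
      "0 < \<eta>1" "\<eta>1 \<le> \<eta>2" "\<eta>2 < 1" "0 < \<eta>1'" "\<eta>1' < min \<eta>1 (1 - \<eta>2) / 2"
      "\<epsilon> > 0" "kef > 0" "keg > 0"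
    and radius: "0 < \<Delta>" "\<Delta> \<le> \<Delta>max"
    and interp_indep: "inj (\<lambda>t. z t - \<theta>)" "independent (range (\<lambda>t. z t - \<theta>))"
    and interp: "\<And>t. rk + J *v (z t - \<theta>) = rz t"
    and A: "assumptionA r \<theta>0 \<Delta>max LJ"
    and step: "norm s \<le> \<Delta>"
    and B1: "mmodel rk J 0 - mmodel rk J s \<ge>
               (1/2) * norm (gmod rk J) * min \<Delta> (norm (gmod rk J) / (matnorm (Hmod J) + 1))"
    and B2: "\<kappa>H \<ge> 1" "matnorm (Hmod J) + 1 \<le> \<kappa>H"
    and acc: "\<bar>ftil rk - fobj r \<theta>\<bar> \<le> \<delta>"
             "\<delta> \<le> \<eta>1' * (mmodel rk J 0 - mmodel rk J s)"
    and acc_plus: "\<bar>ftil rplus - fobj r (\<theta> + s)\<bar> \<le> \<delta>plus"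
             "\<delta>plus \<le> \<eta>1' * (mmodel rk J 0 - mmodel rk J s)"
    and FL: "fully_linear r rk J \<theta> \<Delta> kef keg"
    and small: "\<Delta> \<le> min ((1 - \<eta>2 - 2 * \<eta>1') / (4 * kef)) (1 / \<kappa>H) * norm (gmod rk J)"
  shows "(ftil rk - ftil rplus) / (mmodel rk J 0 - mmodel rk J s) \<ge> \<eta>2"
proof -
  define g where "g = norm (gmod rk J)"
  define P where "P = mmodel rk J 0 - mmodel rk J s"
  define c where "c = 1 - \<eta>2 - 2 * \<eta>1'"
  have c0: "c > 0" using params unfolding c_def by (auto simp: min_def split: if_splits)
  have g0: "g > 0"
  proof (rule ccontr)
    assume "\<not> g > 0" then have "g = 0" unfolding g_def by simp
    thus False using small radius unfolding g_def by simp
  qed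
  have gnn: "g \<ge> 0" unfolding g_def by simp
  have sm: "\<Delta> \<le> min (c / (4 * kef)) (1 / \<kappa>H) * g" using small unfolding c_def g_def .
  have "min (c / (4 * kef)) (1 / \<kappa>H) * g \<le> c / (4 * kef) * g"
    by (rule mult_right_mono[OF min.cobounded1 gnn])
  hence m1: "\<Delta> \<le> c / (4 * kef) * g" using sm by linarith
  have "min (c / (4 * kef)) (1 / \<kappa>H) * g \<le> 1 / \<kappa>H * g"
    by (rule mult_right_mono[OF min.cobounded2 gnn])
  hence m2: "\<Delta> \<le> g / \<kappa>H" using sm by simp
  have "g / \<kappa>H \<le> g / (matnorm (Hmod J) + 1)"
  proof -
    have "matnorm (Hmod J) \<ge> 0" unfolding matnorm_def by (simp add: onorm_pos_le matrix_vector_mul_bounded_linear)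
    thus ?thesis using B2 g0 by (intro divide_left_mono) auto
  qed
  hence "min \<Delta> (g / (matnorm (Hmod J) + 1)) = \<Delta>" using m2 by simp
  hence PB: "P \<ge> g * \<Delta> / 2" using B1 unfolding P_def g_def by simp
  have Ppos: "P > 0" proof -
    have "g * \<Delta> > 0" using g0 radius by simp
    thus ?thesis using PB by linarith
  qed
  have m0: "mmodel rk J 0 = ftil rk" unfolding mmodel_def ftil_def by simp
  have fl: "\<bar>fobj r (\<theta> + s) - mmodel rk J s\<bar> \<le> kef * \<Delta>^2" using FL step unfolding fully_linear_def by blast
  have k1: "kef * \<Delta>^2 \<le> c * g * \<Delta> / 4"
  proof -
    have "kef * \<Delta> \<le> c * g / 4" using m1 params(11) by (simp add: field_simps)
    hence "kef * \<Delta> * \<Delta> \<le> c * g / 4 * \<Delta>" using radius by (intro mult_right_mono) auto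
    thus ?thesis by (simp add: power2_eq_square field_simps)
  qed
  have k2: "c * g * \<Delta> / 4 \<le> c * P / 2" proof -
    have "c * (g * \<Delta> / 2) \<le> c * P" using PB c0 by (intro mult_left_mono) auto
    thus ?thesis by (simp add: algebra_simps)
  qed
  have num: "ftil rk - ftil rplus \<ge> \<eta>2 * P"
  proof -
    have "ftil rk - ftil rplus = P + (mmodel rk J s - fobj r (\<theta> + s)) + (fobj r (\<theta> + s) - ftil rplus)"
      unfolding P_def m0 by simp
    moreover have "fobj r (\<theta> + s) - ftil rplus \<ge> - \<eta>1' * P" using acc_plus unfolding P_def by linarith
    moreover have "c * P / 2 \<le> (1 - \<eta>2 - \<eta>1') * P" using Ppos params unfolding c_def by (simp add: field_simps)
    ultimately show ?thesis using fl k1 k2 by (simp add: algebra_simps)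
  qed
  show ?thesis using num Ppos unfolding P_def by (simp add: pos_le_divide_eq)
qed

end
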